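(* Let $(G,w)$ be a weighted trigraph and let $(A,B,C)$ be a cut-partition of $G$. For each $X\in\{A,B\}$, let $G_X$ be a trigraph obtained from $G[X\cup C]$ by turning some (possibly none) of the strongly anti-adjacent pairs of $G[X\cup C]$ into semi-adjacent pairs (so that $w$ restricted to $D(G_X)$ is a weight function for $G_X$). For every $C'\subseteq C$ set $\alpha_{A\cup C'}=\alpha(\mathrm{Red}[G_A,w;A\cup C'])+\mathrm{Ext}[G_A,w;A\cup C']$. Let $k\in\mathbb N$ and let $w_B$ be a weight function for $G_B$ such that: $w_B(u)=w(u)$ for all $u\in B$; $w_B(u,v)=w(u,v)$, $w_B(v,u)=w(v,u)$ and $w_B(uv)=w(uv)$ for all $uv\in\binom{B\cup C}{2}\setminus\binom{C}{2}$; and $\llbracket S_C\rrbracket_{(G_B[C],w_B)}=\alpha_{A\cup S_C}-k$ for every $S_C\subseteq C$ that is a stable set of $G_B$. Then $\alpha(G,w)=k+\alpha(G_B,w_B)$.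
   Context: A trigraph $G$ consists of a finite vertex set $V(G)$ and an adjacency function $\theta_G:\binom{V(G)}{2}\to\{-1,0,1\}$; for distinct $u,v$ write $uv$ for $\{u,v\}$. The pair $uv$ is strongly adjacent if $\theta_G(uv)=1$, semi-adjacent if $\theta_G(uv)=0$, strongly anti-adjacent if $\theta_G(uv)=-1$; $u,v$ are anti-adjacent if $\theta_G(uv)\le 0$. A stable set is a set of pairwise anti-adjacent vertices. For $X\subseteq V(G)$, $G[X]$ is the trigraph on $X$ with the restricted adjacency function. $\mathbb N$ denotes the non-negative integers. For a trigraph $G$ let $D(G)=V(G)\cup\{(u,v):u,v\in V(G),u\neq v\}\cup\binom{V(G)}{2}$. A weight function for $G$ is a map $w:D(G)\to\mathbb N$ such that for all distinct $u,v$: if $uv$ is not semi-adjacent then $w(u,v)=w(v,u)=w(uv)=0$, and $w(u,v)\le w(uv)$. A weighted trigraph is a pair $(G,w)$ with $w$ a weight function for $G$; for $X\subseteq V(G)$, $(G[X],w)$ denotes $(G[X],w|_{D(G[X])})$. The weight of $S\subseteq V(G)$ is $\llbracket S\rrbracket_{(G,w)}=\sum_{u\in S}w(u)+\sum_{u\in S}\sum_{v\in V(G)\setminus S}w(u,v)+\sum_{uv\in\binom{V(G)\setminus S}{2}}w(uv)$, and $\alpha(G,w)=\max\{\llbracket S\rrbracket_{(G,w)}: S \text{ a stable set of } G\}$. For $R\subseteq V(G)$, the reduction $\mathrm{Red}[G,w;R]$ is the weighted trigraph $(G[R],w')$ where $w'(u)=\max\{w(u)-\sum_{v\in V(G)\setminus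 R}(w(uv)-w(u,v)),0\}$ for $u\in R$, and $w'(u,v)=w(u,v)$, $w'(uv)=w(uv)$ for distinct $u,v\in R$. The exterior weight is $\mathrm{Ext}[G,w;R]=\sum_{uv\in\binom{V(G)\setminus R}{2}}w(uv)+\sum_{u\in R}\sum_{v\in V(G)\setminus R}w(uv)$. A cut-partition of $G$ is a partition $(A,B,C)$ of $V(G)$ with $A,B$ non-empty ($C$ possibly empty) such that every vertex of $A$ is strongly anti-adjacent to every vertex of $B$. *)

theory Defs
  imports Main
begin

text \<open>A trigraph: a finite vertex set and an adjacency function on unordered pairs
  (2-element subsets of the vertex set); values outside the pairs are irrelevant.\<close>
record 'a trigraph =
  verts :: "'a set"
  adj :: "'a set \<Rightarrow> int"

text \<open>Weights on D(G): vertices, ordered pairs (u,v), unordered pairs {u,v}.\<close>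
record 'a wfun =
  wv :: "'a \<Rightarrow> nat"
  wo :: "'a \<Rightarrow> 'a \<Rightarrow> nat"
  wu :: "'a set \<Rightarrow> nat"

definition pairs :: "'a set \<Rightarrow> 'a set set" where
  "pairs X = {e. e \<subseteq> X \<and> card e = 2}"

definition trigraph :: "'a trigraph \<Rightarrow> bool" where
  "trigraph G \<longleftrightarrow> finite (verts G) \<and> (\<forall>e\<in>pairs (verts G). adj G e \<in> {-1, 0, 1})"

definition weight_fun :: "'a trigraph \<Rightarrow> 'a wfun \<Rightarrow> bool" where
  "weight_fun G w \<longleftrightarrow>
     (\<forall>u\<in>verts G. \<forall>v\<in>verts G. u \<noteq> v \<longrightarrow>
        ((adj G {u,v} \<noteq> 0 \<longrightarrow> wo w u v = 0 \<and> wo w v u = 0 \<and> wu w {u,v} = 0)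
         \<and> wo w u v \<le> wu w {u,v}))"

definition induced :: "'a trigraph \<Rightarrow> 'a set \<Rightarrow> 'a trigraph" where
  "induced G X = \<lparr>verts = X, adj = adj G\<rparr>"

definition stable :: "'a trigraph \<Rightarrow> 'a set \<Rightarrow> bool" where
  "stable G S \<longleftrightarrow> S \<subseteq> verts G \<and> (\<forall>u\<in>S. \<forall>v\<in>S. u \<noteq> v \<longrightarrow> adj G {u,v} \<le> 0)"

definition setweight :: "'a trigraph \<times> 'a wfun \<Rightarrow> 'a set \<Rightarrow> nat" where
  "setweight Gw S = (let G = fst Gw; w = snd Gw in
     (\<Sum>u\<in>S. wv w u) + (\<Sum>u\<in>S. \<Sum>v\<in>verts G - S. wo w u v)
     + (\<Sum>e\<in>pairs (verts G - S). wu w e))"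

definition alpha :: "'a trigraph \<times> 'a wfun \<Rightarrow> nat" where
  "alpha Gw = Max (setweight Gw ` {S. stable (fst Gw) S})"

definition red :: "'a trigraph \<Rightarrow> 'a wfun \<Rightarrow> 'a set \<Rightarrow> 'a trigraph \<times> 'a wfun" where
  "red G w R = (induced G R,
     w\<lparr>wv := (\<lambda>u. nat (max (int (wv w u)
        - (\<Sum>v\<in>verts G - R. int (wu w {u,v}) - int (wo w u v))) 0))\<rparr>)"

definition ext :: "'a trigraph \<Rightarrow> 'a wfun \<Rightarrow> 'a set \<Rightarrow> nat" where
  "ext G w R = (\<Sum>e\<in>pairs (verts G - R). wu w e) + (\<Sum>u\<in>R. \<Sum>v\<in>verts G - R. wu w {u,v})"

definition cut_partition :: "'a trigraph \<Rightarrow> 'a set \<Rightarrow> 'a set \<Rightarrow> 'a set \<Rightarrow> bool" where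
  "cut_partition G A B C \<longleftrightarrow>
     A \<union> B \<union> C = verts G \<and> A \<inter> B = {} \<and> A \<inter> C = {} \<and> B \<inter> C = {}
     \<and> A \<noteq> {} \<and> B \<noteq> {} \<and> (\<forall>a\<in>A. \<forall>b\<in>B. adj G {a,b} = -1)"

definition semi_extension :: "'a trigraph \<Rightarrow> 'a set \<Rightarrow> 'a trigraph \<Rightarrow> bool" where
  "semi_extension G X H \<longleftrightarrow> verts H = X \<and>
     (\<forall>e\<in>pairs X. adj H e = adj G e \<or> (adj G e = -1 \<and> adj H e = 0))"

definition alpha_sub :: "'a trigraph \<Rightarrow> 'a wfun \<Rightarrow> 'a set \<Rightarrow> nat" where
  "alpha_sub GA w R = alpha (red GA w R) + ext GA w R"

end

theory Submission
  imports Defs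
begin


lemma pairs_finite: "finite X \<Longrightarrow> finite (pairs X)"
  unfolding pairs_def by (rule finite_subset[of _ "Pow X"]) auto

lemma pairs_empty[simp]: "pairs {} = {}"
  unfolding pairs_def by auto

lemma pairs_mem: "u \<noteq> v \<Longrightarrow> u \<in> X \<Longrightarrow> v \<in> X \<Longrightarrow> {u,v} \<in> pairs X"
  unfolding pairs_def by auto

lemma pairs_elem: "e \<in> pairs X \<Longrightarrow> \<exists>u v. u \<noteq> v \<and> u \<in> X \<and> v \<in> X \<and> e = {u,v}"
  unfolding pairs_def by (auto simp: card_2_iff)

lemma pairs_insert:
  assumes "u \<notin> X"
  shows "pairs (insert u X) = pairs X \<union> (\<lambda>v. {u,v}) ` X"
proof (intro equalityI subsetI)
  fix e assume "e \<in> pairs (insert u X)"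
  then obtain a b where ab: "a \<noteq> b" "a \<in> insert u X" "b \<in> insert u X" "e = {a,b}"
    using pairs_elem by metis
  show "e \<in> pairs X \<union> (\<lambda>v. {u,v}) ` X"
  proof (cases "a = u")
    case True then show ?thesis using ab by auto
  next
    case False
    show ?thesis
    proof (cases "b = u")
      case True then show ?thesis using ab False by (auto simp: insert_commute)
    next
      case F2: False
      then show ?thesis using ab False by (auto intro: pairs_mem)
    qed
  qed
next
  fix e assume "e \<in> pairs X \<union> (\<lambda>v. {u,v}) ` X"
  then show "e \<in> pairs (insert u X)" using assms unfolding pairs_def by (auto simp: card_insert_if)
qed

lemma sum_pairs_insert:
  assumes "finite X" "u \<notin> X"
  shows "(\<Sum>e\<in>pairs (insert u X). f e) = (\<Sum>e\<in>pairs X. f e) + (\<Sum>v\<in>X. f {u,v})"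
proof -
  have d: "pairs X \<inter> (\<lambda>v. {u,v}) ` X = {}" using assms(2) unfolding pairs_def by auto
  have i: "inj_on (\<lambda>v. {u,v}) X" using assms(2) by (auto simp: inj_on_def doubleton_eq_iff)
  show ?thesis unfolding pairs_insert[OF assms(2)]
      sum.union_disjoint[OF pairs_finite[OF assms(1)] finite_imageI[OF assms(1)] d]
      sum.reindex[OF i] comp_def by simp
qed

lemma sum_pairs_union:
  assumes "finite X" "finite Y" "X \<inter> Y = {}"
  shows "(\<Sum>e\<in>pairs (X \<union> Y). f e) = (\<Sum>e\<in>pairs X. f e) + (\<Sum>e\<in>pairs Y. f e) + (\<Sum>x\<in>X. \<Sum>y\<in>Y. f {x,y})"
  using assms
proof (induction X rule: finite_induct)
  case empty then show ?case by simp
next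
  case (insert x X)
  have x: "x \<notin> X \<union> Y" using insert by auto
  have e1: "insert x X \<union> Y = insert x (X \<union> Y)" by simp
  have e2: "(\<Sum>e\<in>pairs (insert x (X \<union> Y)). f e) = (\<Sum>e\<in>pairs (X \<union> Y). f e) + (\<Sum>v\<in>X \<union> Y. f {x,v})"
    by (rule sum_pairs_insert[OF _ x]) (use insert in simp)
  have e3: "(\<Sum>v\<in>X \<union> Y. f {x,v}) = (\<Sum>v\<in>X. f {x,v}) + (\<Sum>v\<in>Y. f {x,v})"
    using insert by (intro sum.union_disjoint) auto
  have IH: "(\<Sum>e\<in>pairs (X \<union> Y). f e) = (\<Sum>e\<in>pairs X. f e) + (\<Sum>e\<in>pairs Y. f e) + (\<Sum>x\<in>X. \<Sum>y\<in>Y. f {x,y})"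
    using insert by auto
  have e4: "(\<Sum>e\<in>pairs (insert x X). f e) = (\<Sum>e\<in>pairs X. f e) + (\<Sum>v\<in>X. f {x,v})"
    using sum_pairs_insert insert by auto
  have e5: "(\<Sum>x'\<in>insert x X. \<Sum>y\<in>Y. f {x',y}) = (\<Sum>y\<in>Y. f {x,y}) + (\<Sum>x\<in>X. \<Sum>y\<in>Y. f {x,y})"
    using insert by simp
  show ?case unfolding e1 e2 e3 IH e4 e5 by (simp add: ac_simps)
qed

definition gam :: "'a wfun \<Rightarrow> 'a set \<Rightarrow> 'a set \<Rightarrow> 'a set \<Rightarrow> 'a set \<Rightarrow> 'a set \<Rightarrow> nat" where
  "gam w V X Y SX SY = (\<Sum>u\<in>SY. wv w u) + (\<Sum>u\<in>SY. \<Sum>v\<in>V-(SX\<union>SY). wo w u v)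
     + (\<Sum>u\<in>SX. \<Sum>v\<in>Y-SY. wo w u v) + (\<Sum>e\<in>pairs(Y-SY). wu w e) + (\<Sum>x\<in>X-SX. \<Sum>y\<in>Y-SY. wu w {x,y})"

lemma sw_split:
  assumes "verts G = X \<union> Y" "verts G' = X" "X \<inter> Y = {}" "finite X" "finite Y" "S \<subseteq> X \<union> Y"
  shows "setweight (G,w) S = setweight (G',w) (S \<inter> X) + gam w (X \<union> Y) X Y (S \<inter> X) (S \<inter> Y)"
proof -
  let ?SX = "S \<inter> X" let ?SY = "S \<inter> Y"
  have Su: "?SX \<union> ?SY = S" using assms by auto
  have fX: "finite ?SX" "finite ?SY" using assms by auto
  have U: "sum f S = sum f ?SX + sum f ?SY" for f :: "'a \<Rightarrow> nat"
  proof -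
    have "sum f (?SX \<union> ?SY) = sum f ?SX + sum f ?SY"
      by (rule sum.union_disjoint) (use fX assms in auto)
    then show ?thesis using Su by simp
  qed
  have D: "(X \<union> Y) - S = (X - ?SX) \<union> (Y - ?SY)" using assms by auto
  have DU: "sum f ((X \<union> Y) - S) = sum f (X - ?SX) + sum f (Y - ?SY)" for f :: "'a \<Rightarrow> nat"
    unfolding D by (rule sum.union_disjoint) (use assms in auto)
  have P: "(\<Sum>e\<in>pairs ((X \<union> Y) - S). wu w e) = (\<Sum>e\<in>pairs (X - ?SX). wu w e) + (\<Sum>e\<in>pairs (Y - ?SY). wu w e)
      + (\<Sum>x\<in>X - ?SX. \<Sum>y\<in>Y - ?SY. wu w {x,y})"
    unfolding D by (rule sum_pairs_union) (use assms in auto)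
  have O: "(\<Sum>u\<in>S. \<Sum>v\<in>(X \<union> Y) - S. wo w u v) = (\<Sum>u\<in>?SX. \<Sum>v\<in>X - ?SX. wo w u v)
      + (\<Sum>u\<in>?SX. \<Sum>v\<in>Y - ?SY. wo w u v) + (\<Sum>u\<in>?SY. \<Sum>v\<in>(X \<union> Y) - S. wo w u v)"
  proof -
    have "(\<Sum>u\<in>S. \<Sum>v\<in>(X \<union> Y) - S. wo w u v) = (\<Sum>u\<in>?SX. \<Sum>v\<in>(X \<union> Y) - S. wo w u v)
       + (\<Sum>u\<in>?SY. \<Sum>v\<in>(X \<union> Y) - S. wo w u v)" by (rule U)
    moreover have "(\<Sum>u\<in>?SX. \<Sum>v\<in>(X \<union> Y) - S. wo w u v) = (\<Sum>u\<in>?SX. \<Sum>v\<in>X - ?SX. wo w u v)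
      + (\<Sum>u\<in>?SX. \<Sum>v\<in>Y - ?SY. wo w u v)"
      unfolding DU sum.distrib by simp
    ultimately show ?thesis by simp
  qed
  show ?thesis
    unfolding setweight_def Let_def fst_conv snd_conv assms(1,2) gam_def Su U[of "wv w"] O P
    by simp
qed



lemma gam_G:
  assumes zero: "\<forall>a\<in>A. \<forall>b\<in>B. wo w a b = 0 \<and> wo w b a = 0 \<and> wu w {a,b} = 0"
    and disj: "A \<inter> B = {}" "A \<inter> C = {}" "B \<inter> C = {}"
    and fin: "finite A" "finite B" "finite C"
  shows "gam w ((A \<union> C) \<union> B) (A \<union> C) B (S \<inter> (A \<union> C)) (S \<inter> B) = gam w (C \<union> B) C B (S \<inter> C) (S \<inter> B)"
proof -
  have t2: "(\<Sum>u\<in>S \<inter> B. \<Sum>v\<in>((A \<union> C) \<union> B) - (S \<inter> (A \<union> C) \<union> S \<inter> B). wo w u v)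
      = (\<Sum>u\<in>S \<inter> B. \<Sum>v\<in>(C \<union> B) - (S \<inter> C \<union> S \<inter> B). wo w u v)"
  proof (rule sum.cong[OF refl], rule sum.mono_neutral_right)
    fix u assume u: "u \<in> S \<inter> B"
    show "finite ((A \<union> C) \<union> B - (S \<inter> (A \<union> C) \<union> S \<inter> B))" using fin by auto
    show "C \<union> B - (S \<inter> C \<union> S \<inter> B) \<subseteq> A \<union> C \<union> B - (S \<inter> (A \<union> C) \<union> S \<inter> B)" by auto
    show "\<forall>i\<in>A \<union> C \<union> B - (S \<inter> (A \<union> C) \<union> S \<inter> B) - (C \<union> B - (S \<inter> C \<union> S \<inter> B)). wo w u i = 0"
      using zero u by auto
  qed
  have t3: "(\<Sum>u\<in>S \<inter> (A \<union> C). \<Sum>v\<in>B - S \<inter> B. wo w u v) = (\<Sum>u\<in>S \<inter> C. \<Sum>v\<in>B - S \<inter> B. wo w u v)"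
    by (rule sum.mono_neutral_right) (use fin zero in auto)
  have t5: "(\<Sum>x\<in>(A \<union> C) - S \<inter> (A \<union> C). \<Sum>y\<in>B - S \<inter> B. wu w {x,y}) = (\<Sum>x\<in>C - S \<inter> C. \<Sum>y\<in>B - S \<inter> B. wu w {x,y})"
    by (rule sum.mono_neutral_right) (use fin zero in auto)
  show ?thesis unfolding gam_def t2 t3 t5 by simp
qed

lemma gam_B:
  assumes H: "\<forall>u\<in>B \<union> C. \<forall>v\<in>B \<union> C. u \<noteq> v \<and> \<not> {u,v} \<subseteq> C \<longrightarrow>
           wo wB u v = wo w u v \<and> wo wB v u = wo w v u \<and> wu wB {u,v} = wu w {u,v}"
    and Hv: "\<forall>u\<in>B. wv wB u = wv w u"
    and disj: "B \<inter> C = {}" and S: "SC \<subseteq> C" "SB \<subseteq> B"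
  shows "gam wB (C \<union> B) C B SC SB = gam w (C \<union> B) C B SC SB"
proof -
  have t1: "(\<Sum>u\<in>SB. wv wB u) = (\<Sum>u\<in>SB. wv w u)" using Hv S by (intro sum.cong) auto
  have t2: "(\<Sum>u\<in>SB. \<Sum>v\<in>(C \<union> B) - (SC \<union> SB). wo wB u v) = (\<Sum>u\<in>SB. \<Sum>v\<in>(C \<union> B) - (SC \<union> SB). wo w u v)"
  proof (intro sum.cong refl)
    fix u v assume u: "u \<in> SB" and v: "v \<in> (C \<union> B) - (SC \<union> SB)"
    then have "u \<noteq> v" "\<not> {u,v} \<subseteq> C" "u \<in> B \<union> C" "v \<in> B \<union> C" using S disj by auto
    then show "wo wB u v = wo w u v" using H by blast
  qed
  have t3: "(\<Sum>u\<in>SC. \<Sum>v\<in>B - SB. wo wB u v) = (\<Sum>u\<in>SC. \<Sum>v\<in>B - SB. wo w u v)"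
  proof (intro sum.cong refl)
    fix u v assume u: "u \<in> SC" and v: "v \<in> B - SB"
    then have "u \<noteq> v" "\<not> {u,v} \<subseteq> C" "u \<in> B \<union> C" "v \<in> B \<union> C" using S disj by auto
    then show "wo wB u v = wo w u v" using H by blast
  qed
  have t4: "(\<Sum>e\<in>pairs (B - SB). wu wB e) = (\<Sum>e\<in>pairs (B - SB). wu w e)"
  proof (intro sum.cong refl)
    fix e assume "e \<in> pairs (B - SB)"
    then obtain u v where uv: "u \<noteq> v" "u \<in> B - SB" "v \<in> B - SB" "e = {u,v}" using pairs_elem by metis
    then have "\<not> {u,v} \<subseteq> C" "u \<in> B \<union> C" "v \<in> B \<union> C" using disj by auto
    then show "wu wB e = wu w e" using H uv by blast
  qed
  have t5: "(\<Sum>x\<in>C - SC. \<Sum>y\<in>B - SB. wu wB {x,y}) = (\<Sum>x\<in>C - SC. \<Sum>y\<in>B - SB. wu w {x,y})"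
  proof (intro sum.cong refl)
    fix u v assume u: "u \<in> C - SC" and v: "v \<in> B - SB"
    then have "u \<noteq> v" "\<not> {u,v} \<subseteq> C" "u \<in> B \<union> C" "v \<in> B \<union> C" using S disj by auto
    then show "wu wB {u,v} = wu w {u,v}" using H by blast
  qed
  show ?thesis unfolding gam_def t1 t2 t3 t4 t5 by simp
qed

lemma if_sum_split:
  assumes "finite C" "Z \<subseteq> C"
  shows "(\<Sum>u\<in>Z. F u) + (\<Sum>x\<in>C - Z. H x) = (\<Sum>x\<in>C. if x \<in> Z then F x else (H x :: nat))"
proof -
  have "(\<Sum>x\<in>C. if x \<in> Z then F x else H x) = sum F (C \<inter> {x. x \<in> Z}) + sum H (C \<inter> - {x. x \<in> Z})"
    by (rule sum.If_cases) (rule assms(1))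
  moreover have "C \<inter> {x. x \<in> Z} = Z" "C \<inter> - {x. x \<in> Z} = C - Z" using assms by auto
  ultimately show ?thesis by simp
qed

lemma gam_anti:
  assumes wp: "\<forall>x\<in>C. \<forall>y\<in>B. wo w x y \<le> wu w {x,y}"
    and fin: "finite B" "finite C" and X: "X \<subseteq> X'" "X' \<subseteq> C"
  shows "gam w (C \<union> B) C B X' SB \<le> gam w (C \<union> B) C B X SB"
proof -
  have t2: "(\<Sum>u\<in>SB. \<Sum>v\<in>(C \<union> B) - (X' \<union> SB). wo w u v) \<le> (\<Sum>u\<in>SB. \<Sum>v\<in>(C \<union> B) - (X \<union> SB). wo w u v)"
    by (intro sum_mono sum_mono2) (use fin X in auto)
  have tt: "(\<Sum>u\<in>Z. \<Sum>v\<in>B - SB. wo w u v) + (\<Sum>x\<in>C - Z. \<Sum>y\<in>B - SB. wu w {x,y})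
     = (\<Sum>x\<in>C. if x \<in> Z then (\<Sum>v\<in>B - SB. wo w x v) else (\<Sum>y\<in>B - SB. wu w {x,y}))" if "Z \<subseteq> C" for Z
    by (rule if_sum_split) (use fin that in auto)
  have t35: "(\<Sum>x\<in>C. if x \<in> X' then (\<Sum>v\<in>B - SB. wo w x v) else (\<Sum>y\<in>B - SB. wu w {x,y}))
     \<le> (\<Sum>x\<in>C. if x \<in> X then (\<Sum>v\<in>B - SB. wo w x v) else (\<Sum>y\<in>B - SB. wu w {x,y}))"
  proof (rule sum_mono)
    fix x assume x: "x \<in> C"
    have "(\<Sum>v\<in>B - SB. wo w x v) \<le> (\<Sum>y\<in>B - SB. wu w {x,y})"
      by (rule sum_mono) (use wp x in auto)
    then show "(if x \<in> X' then (\<Sum>v\<in>B - SB. wo w x v) else (\<Sum>y\<in>B - SB. wu w {x,y}))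
     \<le> (if x \<in> X then (\<Sum>v\<in>B - SB. wo w x v) else (\<Sum>y\<in>B - SB. wu w {x,y}))"
      using X by auto
  qed
  have X'C: "X \<subseteq> C" using X by auto
  show ?thesis unfolding gam_def using t2 t35 tt[OF X'C] tt[OF X(2)] by linarith
qed



definition dd :: "'a trigraph \<Rightarrow> 'a wfun \<Rightarrow> 'a set \<Rightarrow> 'a \<Rightarrow> int" where
  "dd G w R u = (\<Sum>v\<in>verts G - R. int (wu w {u,v}) - int (wo w u v))"

definition wred :: "'a trigraph \<Rightarrow> 'a wfun \<Rightarrow> 'a set \<Rightarrow> 'a \<Rightarrow> nat" where
  "wred G w R u = nat (max (int (wv w u) - dd G w R u) 0)"

lemma sw_red: "setweight (red G w R) T = (\<Sum>u\<in>T. wred G w R u) + (\<Sum>u\<in>T. \<Sum>v\<in>R - T. wo w u v)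
   + (\<Sum>e\<in>pairs (R - T). wu w e)"
  by (simp add: setweight_def red_def induced_def Let_def wred_def dd_def)

lemma sw_def': "setweight (G,w) T = (\<Sum>u\<in>T. wv w u) + (\<Sum>u\<in>T. \<Sum>v\<in>verts G - T. wo w u v)
   + (\<Sum>e\<in>pairs (verts G - T). wu w e)"
  by (simp add: setweight_def Let_def)

lemma aux1: "b = b1 + b2 \<Longrightarrow> p = p1 + p2 + p3 \<Longrightarrow> c = c1 + p3 \<Longrightarrow>
   (r1 + b1 + p1) + (p2 + c) + v1 + b2 = (v1 + b + p) + r1 + (c1::nat)"
  by simp

lemma aux2: "A = x + A' \<Longrightarrow> B = y + B' \<Longrightarrow> B' \<le> B'' \<Longrightarrow> P' = P + z \<Longrightarrow>
   (A + B + P) + z \<le> (A' + B'' + P') + x + (y::nat)"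
  by simp

lemma aux3: "s + e + x1 + x2 = p + y1 + y2 \<Longrightarrow> x1 + x2 \<le> y1 + y2 \<Longrightarrow> s \<le> a \<Longrightarrow> p \<le> a + (e::nat)"
  by linarith

lemma aux4: "d = int P - int Q \<Longrightarrow> int a - d \<le> int r \<Longrightarrow> a + Q \<le> r + (P::nat)"
  by linarith

lemma E1:
  assumes fin: "finite (verts G)" and R: "R \<subseteq> verts G" and T: "T \<subseteq> R"
  shows "setweight (red G w R) T + ext G w R + (\<Sum>u\<in>T. wv w u) + (\<Sum>u\<in>T. \<Sum>v\<in>verts G - R. wo w u v)
   = setweight (G,w) T + (\<Sum>u\<in>T. wred G w R u) + (\<Sum>u\<in>T. \<Sum>v\<in>verts G - R. wu w {u,v})"
proof -
  let ?V = "verts G"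
  have fR: "finite R" "finite T" using fin R T by (auto intro: finite_subset)
  have D: "?V - T = (R - T) \<union> (?V - R)" using R T by auto
  have a: "(\<Sum>u\<in>T. \<Sum>v\<in>?V - T. wo w u v) = (\<Sum>u\<in>T. \<Sum>v\<in>R - T. wo w u v) + (\<Sum>u\<in>T. \<Sum>v\<in>?V - R. wo w u v)"
  proof -
    have "(\<Sum>v\<in>?V - T. wo w u v) = (\<Sum>v\<in>R - T. wo w u v) + (\<Sum>v\<in>?V - R. wo w u v)" for u
      unfolding D by (rule sum.union_disjoint) (use fin fR in auto)
    then show ?thesis by (simp add: sum.distrib)
  qed
  have b: "(\<Sum>e\<in>pairs (?V - T). wu w e) = (\<Sum>e\<in>pairs (R - T). wu w e) + (\<Sum>e\<in>pairs (?V - R). wu w e)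
     + (\<Sum>x\<in>R - T. \<Sum>y\<in>?V - R. wu w {x,y})"
    unfolding D by (rule sum_pairs_union) (use fin fR in auto)
  have c: "(\<Sum>u\<in>R. \<Sum>v\<in>?V - R. wu w {u,v}) = (\<Sum>u\<in>T. \<Sum>v\<in>?V - R. wu w {u,v}) + (\<Sum>u\<in>R - T. \<Sum>v\<in>?V - R. wu w {u,v})"
    by (subst add.commute) (rule sum.subset_diff[OF T fR(1)])
  show ?thesis unfolding sw_red sw_def' ext_def by (rule aux1[OF a b c])
qed

lemma finite_stable: "finite (verts G) \<Longrightarrow> finite {S. stable G S}"
  unfolding stable_def by (rule finite_subset[of _ "Pow (verts G)"]) auto

lemma alpha_ge: "finite (verts (fst Gw)) \<Longrightarrow> stable (fst Gw) S \<Longrightarrow> setweight Gw S \<le> alpha Gw"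
  unfolding alpha_def by (rule Max_ge) (auto intro: finite_stable)

lemma alpha_ex: "finite (verts (fst Gw)) \<Longrightarrow> \<exists>S. stable (fst Gw) S \<and> alpha Gw = setweight Gw S"
proof -
  assume f: "finite (verts (fst Gw))"
  have "stable (fst Gw) {}" unfolding stable_def by auto
  then have "alpha Gw \<in> setweight Gw ` {S. stable (fst Gw) S}"
    unfolding alpha_def by (intro Max_in) (auto intro: finite_stable f)
  then show ?thesis by auto
qed

lemma stable_mono: "stable G S \<Longrightarrow> S' \<subseteq> S \<Longrightarrow> stable G S'"
  unfolding stable_def by auto

lemma stable_induced: "stable (induced G R) T \<longleftrightarrow> T \<subseteq> R \<and> (\<forall>u\<in>T. \<forall>v\<in>T. u \<noteq> v \<longrightarrow> adj G {u,v} \<le> 0)"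
  by (simp add: stable_def induced_def)

lemma fst_red: "fst (red G w R) = induced G R" by (simp add: red_def)

lemma verts_induced[simp]: "verts (induced G R) = R" by (simp add: induced_def)

lemma red_upper:
  assumes fin: "finite (verts G)" and R: "R \<subseteq> verts G"
    and wp: "\<forall>u\<in>verts G. \<forall>v\<in>verts G. u \<noteq> v \<longrightarrow> wo w u v \<le> wu w {u,v}"
    and st: "stable (induced G R) T"
  shows "setweight (G,w) T \<le> alpha_sub G w R"
proof -
  have T: "T \<subseteq> R" using st by (simp add: stable_induced)
  have fR: "finite R" using fin R by (auto intro: finite_subset)
  have al: "setweight (red G w R) T \<le> alpha (red G w R)"
    by (rule alpha_ge) (use st fR in \<open>auto simp: fst_red\<close>)
  have pu: "wv w u + (\<Sum>v\<in>verts G - R. wo w u v) \<le> wred G w R u + (\<Sum>v\<in>verts G - R. wu w {u,v})"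
    if u: "u \<in> T" for u
  proof -
    have "dd G w R u = int (\<Sum>v\<in>verts G - R. wu w {u,v}) - int (\<Sum>v\<in>verts G - R. wo w u v)"
      unfolding dd_def by (simp add: sum_subtractf)
    moreover have "int (wv w u) - dd G w R u \<le> int (wred G w R u)" unfolding wred_def by simp
    ultimately show ?thesis by (rule aux4)
  qed
  have "(\<Sum>u\<in>T. wv w u + (\<Sum>v\<in>verts G - R. wo w u v)) \<le> (\<Sum>u\<in>T. wred G w R u + (\<Sum>v\<in>verts G - R. wu w {u,v}))"
    by (rule sum_mono) (rule pu)
  then have "(\<Sum>u\<in>T. wv w u) + (\<Sum>u\<in>T. \<Sum>v\<in>verts G - R. wo w u v) \<le> (\<Sum>u\<in>T. wred G w R u) + (\<Sum>u\<in>T. \<Sum>v\<in>verts G - R. wu w {u,v})"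
    by (simp add: sum.distrib)
  then show ?thesis unfolding alpha_sub_def by (rule aux3[OF E1[OF fin R T, of w] _ al])
qed

lemma remove_one:
  assumes fin: "finite (verts G)" and T: "T \<subseteq> verts G" and u: "u \<in> T"
  shows "setweight (G,w) T + (\<Sum>v\<in>verts G - T. wu w {u,v})
     \<le> setweight (G,w) (T - {u}) + wv w u + (\<Sum>v\<in>verts G - T. wo w u v)"
proof -
  let ?V = "verts G"
  have fT: "finite T" using fin T by (auto intro: finite_subset)
  have a: "(\<Sum>x\<in>T. wv w x) = wv w u + (\<Sum>x\<in>T - {u}. wv w x)" by (rule sum.remove[OF fT u])
  have b: "(\<Sum>t\<in>T. \<Sum>v\<in>?V - T. wo w t v) = (\<Sum>v\<in>?V - T. wo w u v) + (\<Sum>t\<in>T - {u}. \<Sum>v\<in>?V - T. wo w t v)"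
    by (rule sum.remove[OF fT u])
  have c: "(\<Sum>t\<in>T - {u}. \<Sum>v\<in>?V - T. wo w t v) \<le> (\<Sum>t\<in>T - {u}. \<Sum>v\<in>?V - (T - {u}). wo w t v)"
    by (intro sum_mono sum_mono2) (use fin u in auto)
  have e: "?V - (T - {u}) = insert u (?V - T)" using T u by auto
  have d: "(\<Sum>e\<in>pairs (?V - (T - {u})). wu w e) = (\<Sum>e\<in>pairs (?V - T). wu w e) + (\<Sum>v\<in>?V - T. wu w {u,v})"
    unfolding e by (rule sum_pairs_insert) (use fin u in auto)
  show ?thesis unfolding sw_def' by (rule aux2[OF a b c d])
qed

lemma arith_aux: "(a::nat) + p \<le> b + c + q \<Longrightarrow> d \<le> int p - int q \<Longrightarrow> i + s \<le> int a \<Longrightarrow> i + (d - int c + s) \<le> int b"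
  by linarith



lemma E2:
  assumes fin: "finite (verts G)" and R: "R \<subseteq> verts G" and T0: "T0 \<subseteq> R"
    and wp: "\<forall>u\<in>verts G. \<forall>v\<in>verts G. u \<noteq> v \<longrightarrow> wo w u v \<le> wu w {u,v}"
    and U: "U \<subseteq> T0"
  shows "int (setweight (G,w) T0) + (\<Sum>x\<in>U. dd G w R x - int (wv w x)) \<le> int (setweight (G,w) (T0 - U))"
proof -
  have fU: "finite U" using U T0 R fin by (auto intro: finite_subset)
  show ?thesis using fU U
  proof (induction U rule: finite_induct)
    case empty then show ?case by simp
  next
    case (insert x F)
    have IH: "int (setweight (G,w) T0) + (\<Sum>x\<in>F. dd G w R x - int (wv w x)) \<le> int (setweight (G,w) (T0 - F))"
      using insert by auto
    have x: "x \<in> T0 - F" using insert by auto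
    have sub: "T0 - F \<subseteq> verts G" using T0 R by auto
    have ro: "setweight (G,w) (T0 - F) + (\<Sum>v\<in>verts G - (T0 - F). wu w {x,v})
     \<le> setweight (G,w) ((T0 - F) - {x}) + wv w x + (\<Sum>v\<in>verts G - (T0 - F). wo w x v)"
      by (rule remove_one[OF fin sub x])
    have dle: "dd G w R x \<le> (\<Sum>v\<in>verts G - (T0 - F). int (wu w {x,v}) - int (wo w x v))"
      unfolding dd_def
    proof (rule sum_mono2)
      show "finite (verts G - (T0 - F))" using fin by auto
      show "verts G - R \<subseteq> verts G - (T0 - F)" using T0 by auto
      fix v assume v: "v \<in> verts G - (T0 - F) - (verts G - R)"
      have "x \<noteq> v" "x \<in> verts G" "v \<in> verts G" using v x sub by auto
      then show "0 \<le> int (wu w {x,v}) - int (wo w x v)" using wp by auto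
    qed
    have eq: "(\<Sum>v\<in>verts G - (T0 - F). int (wu w {x,v}) - int (wo w x v))
       = int (\<Sum>v\<in>verts G - (T0 - F). wu w {x,v}) - int (\<Sum>v\<in>verts G - (T0 - F). wo w x v)"
      by (simp add: sum_subtractf)
    have e2: "T0 - insert x F = (T0 - F) - {x}" by auto
    have s: "(\<Sum>y\<in>insert x F. dd G w R y - int (wv w y)) = dd G w R x - int (wv w x) + (\<Sum>y\<in>F. dd G w R y - int (wv w y))"
      using insert by simp
    have dle': "dd G w R x \<le> int (\<Sum>v\<in>verts G - (T0 - F). wu w {x,v}) - int (\<Sum>v\<in>verts G - (T0 - F). wo w x v)"
      using dle unfolding eq .
    show ?case unfolding e2 s by (rule arith_aux[OF ro dle' IH])
  qed
qed



lemma aux5: "s + e + f = p + g \<Longrightarrow> int g = int f + D \<Longrightarrow> int p + D \<le> int q \<Longrightarrow> a = s \<Longrightarrow> a + e \<le> (q::nat)"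
  by linarith

lemma red_lower:
  assumes fin: "finite (verts G)" and R: "R \<subseteq> verts G"
    and wp: "\<forall>u\<in>verts G. \<forall>v\<in>verts G. u \<noteq> v \<longrightarrow> wo w u v \<le> wu w {u,v}"
  shows "\<exists>T. stable (induced G R) T \<and> alpha_sub G w R \<le> setweight (G,w) T"
proof -
  have fR: "finite R" using fin R by (auto intro: finite_subset)
  obtain T0 where T0: "stable (induced G R) T0" "alpha (red G w R) = setweight (red G w R) T0"
    using alpha_ex[of "red G w R"] fR by (auto simp: fst_red)
  have T0R: "T0 \<subseteq> R" using T0(1) by (simp add: stable_induced)
  have fT0: "finite T0" using T0R fR by (auto intro: finite_subset)
  define U where "U = {u\<in>T0. int (wv w u) < dd G w R u}"
  have UT: "U \<subseteq> T0" unfolding U_def by auto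
  define F where "F u = wv w u + (\<Sum>v\<in>verts G - R. wo w u v)" for u
  define Gf where "Gf u = wred G w R u + (\<Sum>v\<in>verts G - R. wu w {u,v})" for u
  have pu: "int (Gf u) = int (F u) + (if int (wv w u) < dd G w R u then dd G w R u - int (wv w u) else 0)" for u
  proof -
    have d: "dd G w R u = int (\<Sum>v\<in>verts G - R. wu w {u,v}) - int (\<Sum>v\<in>verts G - R. wo w u v)"
      unfolding dd_def by (simp add: sum_subtractf)
    have g: "int (Gf u) = int (wred G w R u) + int (\<Sum>v\<in>verts G - R. wu w {u,v})"
      unfolding Gf_def by (simp only: of_nat_add)
    have f: "int (F u) = int (wv w u) + int (\<Sum>v\<in>verts G - R. wo w u v)"
      unfolding F_def by (simp only: of_nat_add)
    show ?thesis
    proof (cases "int (wv w u) < dd G w R u")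
      case True
      then have "int (wred G w R u) = 0" unfolding wred_def by simp
      then show ?thesis using True d g f by simp
    next
      case False
      then have "int (wred G w R u) = int (wv w u) - dd G w R u" unfolding wred_def by simp
      then show ?thesis using False d g f by simp
    qed
  qed
  have sp: "int (sum Gf T0) = int (sum F T0) + (\<Sum>u\<in>U. dd G w R u - int (wv w u))"
  proof -
    have "(\<Sum>u\<in>U. dd G w R u - int (wv w u)) = (\<Sum>u\<in>T0. if int (wv w u) < dd G w R u then dd G w R u - int (wv w u) else 0)"
      unfolding U_def by (rule sum.inter_filter[OF fT0])
    moreover have "int (sum Gf T0) = (\<Sum>u\<in>T0. int (Gf u))" by (rule of_nat_sum)
    moreover have "int (sum F T0) = (\<Sum>u\<in>T0. int (F u))" by (rule of_nat_sum)
    ultimately show ?thesis unfolding pu sum.distrib by simp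
  qed
  have e1: "setweight (red G w R) T0 + ext G w R + sum F T0 = setweight (G,w) T0 + sum Gf T0"
    using E1[OF fin R T0R, of w] unfolding F_def Gf_def sum.distrib by (simp only: add.assoc)
  have stT: "stable (induced G R) (T0 - U)" using T0(1) by (rule stable_mono) auto
  have "alpha_sub G w R \<le> setweight (G,w) (T0 - U)"
    unfolding alpha_sub_def by (rule aux5[OF e1 sp E2[OF fin R T0R wp UT] T0(2)])
  with stT show ?thesis by blast
qed



theorem proposition3p9:
  fixes G GA GB :: "'a trigraph" and w wB :: "'a wfun" and A B C :: "'a set" and k :: nat
  assumes "trigraph G" and "weight_fun G w" and "cut_partition G A B C"
    and "semi_extension G (A \<union> C) GA" and "semi_extension G (B \<union> C) GB"
    and "weight_fun GB wB"
    and "\<forall>u\<in>B. wv wB u = wv w u"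
    and "\<forall>u\<in>B \<union> C. \<forall>v\<in>B \<union> C. u \<noteq> v \<and> \<not> {u,v} \<subseteq> C \<longrightarrow>
           wo wB u v = wo w u v \<and> wo wB v u = wo w v u \<and> wu wB {u,v} = wu w {u,v}"
    and "\<forall>SC. SC \<subseteq> C \<and> stable GB SC \<longrightarrow>
           int (setweight (induced GB C, wB) SC) = int (alpha_sub GA w (A \<union> SC)) - int k"
  shows "alpha (G, w) = k + alpha (GB, wB)"
proof -
  have cp: "A \<union> B \<union> C = verts G" "A \<inter> B = {}" "A \<inter> C = {}" "B \<inter> C = {}"
    "\<forall>a\<in>A. \<forall>b\<in>B. adj G {a,b} = -1"
    using assms(3) unfolding cut_partition_def by auto
  have finV: "finite (verts G)" using assms(1) unfolding trigraph_def by auto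
  have fin: "finite A" "finite B" "finite C" using finV cp(1) by (auto intro: finite_subset)
  have vGA: "verts GA = A \<union> C" and vGB: "verts GB = B \<union> C"
    using assms(4,5) unfolding semi_extension_def by auto
  have adjGA: "\<forall>e\<in>pairs (A \<union> C). adj GA e = adj G e \<or> (adj G e = -1 \<and> adj GA e = 0)"
    using assms(4) unfolding semi_extension_def by auto
  have adjGB: "\<forall>e\<in>pairs (B \<union> C). adj GB e = adj G e \<or> (adj G e = -1 \<and> adj GB e = 0)"
    using assms(5) unfolding semi_extension_def by auto
  have wp: "\<forall>u\<in>verts G. \<forall>v\<in>verts G. u \<noteq> v \<longrightarrow> wo w u v \<le> wu w {u,v}"
    using assms(2) unfolding weight_fun_def by auto
  have wpA: "\<forall>u\<in>verts GA. \<forall>v\<in>verts GA. u \<noteq> v \<longrightarrow> wo w u v \<le> wu w {u,v}"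
    using wp cp(1) vGA by auto
  have zero: "\<forall>a\<in>A. \<forall>b\<in>B. wo w a b = 0 \<and> wo w b a = 0 \<and> wu w {a,b} = 0"
  proof (intro ballI)
    fix a b assume a: "a \<in> A" and b: "b \<in> B"
    then have "a \<in> verts G" "b \<in> verts G" "a \<noteq> b" "adj G {a,b} \<noteq> 0" using cp by auto
    then show "wo w a b = 0 \<and> wo w b a = 0 \<and> wu w {a,b} = 0"
      using assms(2) unfolding weight_fun_def by blast
  qed
  have finA: "finite (verts GA)" using vGA fin by simp
  have adjA: "adj G {u,v} \<le> 0 \<longleftrightarrow> adj GA {u,v} \<le> 0" if "u \<in> A \<union> C" "v \<in> A \<union> C" "u \<noteq> v" for u v
    using adjGA pairs_mem[OF that(3,1,2)] by force
  have adjB: "adj G {u,v} \<le> 0 \<longleftrightarrow> adj GB {u,v} \<le> 0" if "u \<in> B \<union> C" "v \<in> B \<union> C" "u \<noteq> v" for u v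
    using adjGB pairs_mem[OF that(3,1,2)] by force
  have decG: "setweight (G,w) S = setweight (GA,w) (S \<inter> (A \<union> C)) + gam w (C \<union> B) C B (S \<inter> C) (S \<inter> B)"
    if "S \<subseteq> verts G" for S
  proof -
    have "verts G = (A \<union> C) \<union> B" using cp(1) by auto
    then have "setweight (G,w) S = setweight (GA,w) (S \<inter> (A \<union> C)) + gam w ((A \<union> C) \<union> B) (A \<union> C) B (S \<inter> (A \<union> C)) (S \<inter> B)"
      by (intro sw_split) (use vGA cp fin that in auto)
    then show ?thesis using gam_G[OF zero cp(2,3,4) fin] by simp
  qed
  have decB: "setweight (GB,wB) S = setweight (induced GB C, wB) (S \<inter> C) + gam w (C \<union> B) C B (S \<inter> C) (S \<inter> B)"
    if "S \<subseteq> B \<union> C" for S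
  proof -
    have "setweight (GB,wB) S = setweight (induced GB C, wB) (S \<inter> C) + gam wB (C \<union> B) C B (S \<inter> C) (S \<inter> B)"
      by (intro sw_split) (use vGB cp fin that in auto)
    then show ?thesis using gam_B[OF assms(8) assms(7) cp(4), of "S \<inter> C" "S \<inter> B"] by simp
  qed
  have up: "alpha (G,w) \<le> k + alpha (GB,wB)"
  proof -
    obtain S where S: "stable G S" "alpha (G,w) = setweight (G,w) S"
      using alpha_ex[of "(G,w)"] finV by auto
    have SV: "S \<subseteq> verts G" using S(1) unfolding stable_def by auto
    let ?SC = "S \<inter> C"
    have R: "A \<union> ?SC \<subseteq> verts GA" using vGA by auto
    have st1: "stable (induced GA (A \<union> ?SC)) (S \<inter> (A \<union> C))"
      unfolding stable_induced
    proof (intro conjI ballI impI)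
      show "S \<inter> (A \<union> C) \<subseteq> A \<union> ?SC" by auto
      fix u v assume uv: "u \<in> S \<inter> (A \<union> C)" "v \<in> S \<inter> (A \<union> C)" "u \<noteq> v"
      then have "adj G {u,v} \<le> 0" using S(1) unfolding stable_def by auto
      then show "adj GA {u,v} \<le> 0" using adjA[of u v] uv by auto
    qed
    have le1: "setweight (GA,w) (S \<inter> (A \<union> C)) \<le> alpha_sub GA w (A \<union> ?SC)"
      by (rule red_upper[OF finA R wpA st1])
    have stB: "stable GB (S \<inter> (B \<union> C))"
      unfolding stable_def
    proof (intro conjI ballI impI)
      show "S \<inter> (B \<union> C) \<subseteq> verts GB" using vGB by auto
      fix u v assume uv: "u \<in> S \<inter> (B \<union> C)" "v \<in> S \<inter> (B \<union> C)" "u \<noteq> v"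
      then have "adj G {u,v} \<le> 0" using S(1) unfolding stable_def by auto
      then show "adj GB {u,v} \<le> 0" using adjB[of u v] uv by auto
    qed
    have stC: "stable GB ?SC" by (rule stable_mono[OF stB]) auto
    have H: "int (setweight (induced GB C, wB) ?SC) = int (alpha_sub GA w (A \<union> ?SC)) - int k"
      using assms(9) stC by auto
    have le2: "setweight (GB,wB) (S \<inter> (B \<union> C)) \<le> alpha (GB,wB)"
      by (rule alpha_ge) (use stB vGB fin in auto)
    have e3: "(S \<inter> (B \<union> C)) \<inter> C = ?SC" "(S \<inter> (B \<union> C)) \<inter> B = S \<inter> B" by auto
    have dB: "setweight (GB,wB) (S \<inter> (B \<union> C)) = setweight (induced GB C, wB) ?SC + gam w (C \<union> B) C B ?SC (S \<inter> B)"
      using decB[of "S \<inter> (B \<union> C)"] unfolding e3 by auto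
    show ?thesis using S(2) decG[OF SV] le1 H le2 dB by linarith
  qed
  have lo: "k + alpha (GB,wB) \<le> alpha (G,w)"
  proof -
    have fB: "finite (verts (fst (GB,wB)))" using vGB fin by simp
    obtain S where S: "stable GB S" "alpha (GB,wB) = setweight (GB,wB) S"
      using alpha_ex[OF fB] by auto
    have SBC: "S \<subseteq> B \<union> C" using S(1) vGB unfolding stable_def by auto
    let ?SC = "S \<inter> C" and ?SB = "S \<inter> B"
    have R: "A \<union> ?SC \<subseteq> verts GA" using vGA by auto
    obtain T where T: "stable (induced GA (A \<union> ?SC)) T" "alpha_sub GA w (A \<union> ?SC) \<le> setweight (GA,w) T"
      using red_lower[OF finA R wpA] by auto
    have TR: "T \<subseteq> A \<union> ?SC" and Tadj: "\<forall>u\<in>T. \<forall>v\<in>T. u \<noteq> v \<longrightarrow> adj GA {u,v} \<le> 0"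
      using T(1) unfolding stable_induced by auto
    let ?S' = "T \<union> ?SB"
    have stG: "stable G ?S'"
      unfolding stable_def
    proof (intro conjI ballI impI)
      show "?S' \<subseteq> verts G" using TR cp(1) by auto
      fix u v assume u: "u \<in> ?S'" and v: "v \<in> ?S'" and uv: "u \<noteq> v"
      have SB: "\<forall>x\<in>S. \<forall>y\<in>S. x \<noteq> y \<longrightarrow> adj GB {x,y} \<le> 0" using S(1) unfolding stable_def by auto
      have cA: "adj G {x,y} = -1" if "x \<in> A" "y \<in> B" for x y using cp(5) that by auto
      have cA': "adj G {y,x} = -1" if "x \<in> A" "y \<in> B" for x y using cA[OF that] by (simp add: insert_commute)
      show "adj G {u,v} \<le> 0"
      proof (cases "u \<in> T")
        case uT: True
        show ?thesis
        proof (cases "v \<in> T")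
          case True
          then have "adj GA {u,v} \<le> 0" using uT Tadj uv by auto
          moreover have "u \<in> A \<union> C" "v \<in> A \<union> C" using uT True TR by auto
          ultimately show ?thesis using adjA[of u v] uv by auto
        next
          case False
          then have vB: "v \<in> ?SB" using v by auto
          show ?thesis
          proof (cases "u \<in> A")
            case True then show ?thesis using cA vB by auto
          next
            case False then have "u \<in> S" "u \<in> B \<union> C" using uT TR by auto
            then show ?thesis using vB SB adjB uv by auto
          qed
        qed
      next
        case uF: False
        then have uB: "u \<in> ?SB" using u by auto
        show ?thesis
        proof (cases "v \<in> T")
          case vT: True
          show ?thesis
          proof (cases "v \<in> A")
            case True then show ?thesis using cA' uB by auto
          next
            case False then have "v \<in> S" "v \<in> B \<union> C" using vT TR by auto
            then show ?thesis using uB SB adjB uv by auto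
          qed
        next
          case False then have "v \<in> ?SB" using v by auto
          then show ?thesis using uB SB adjB uv by auto
        qed
      qed
    qed
    have S'V: "?S' \<subseteq> verts G" using stG unfolding stable_def by auto
    have e4: "?S' \<inter> (A \<union> C) = T" "?S' \<inter> C = T \<inter> C" "?S' \<inter> B = ?SB" using TR cp by auto
    have dG: "setweight (G,w) ?S' = setweight (GA,w) T + gam w (C \<union> B) C B (T \<inter> C) ?SB"
      using decG[OF S'V] unfolding e4 .
    have wpCB: "\<forall>x\<in>C. \<forall>y\<in>B. wo w x y \<le> wu w {x,y}"
    proof (intro ballI)
      fix x y assume "x \<in> C" "y \<in> B"
      then have "x \<in> verts G" "y \<in> verts G" "x \<noteq> y" using cp by auto
      then show "wo w x y \<le> wu w {x,y}" using wp by blast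
    qed
    have an: "gam w (C \<union> B) C B ?SC ?SB \<le> gam w (C \<union> B) C B (T \<inter> C) ?SB"
      by (rule gam_anti[OF wpCB fin(2,3)]) (use TR cp(3) in auto)
    have stC: "stable GB ?SC" by (rule stable_mono[OF S(1)]) auto
    have H: "int (setweight (induced GB C, wB) ?SC) = int (alpha_sub GA w (A \<union> ?SC)) - int k"
      using assms(9) stC by auto
    have dB: "setweight (GB,wB) S = setweight (induced GB C, wB) ?SC + gam w (C \<union> B) C B ?SC ?SB"
      by (rule decB[OF SBC])
    have le: "setweight (G,w) ?S' \<le> alpha (G,w)"
      by (rule alpha_ge) (use stG finV in auto)
    show ?thesis using S(2) T(2) dG an H dB le by linarith
  qed
  show ?thesis using up lo by linarith
qed


end
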